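(* Let $k\ge1$ and let $F$ be a finite family of wide $2$-way infinite $k$-monotone chains. For $A,B\in F$ say that $A$ is higher than $B$ if $B$ is contained in the upside of $A$. Then "higher" is a partial order on $F$, two members of $F$ are comparable if and only if they are disjoint, and consequently the disjointness graph of $F$ is a comparability graph (in particular $\chi=\omega$ for it).
   Context: A curve is $x$-monotone if every vertical line meets it in at most one point. A $2$-way infinite $k$-monotone chain is a (possibly self-intersecting) continuous curve in the plane that is the union of $k$ consecutive $x$-monotone pieces, consecutive pieces sharing an endpoint, with the first and last pieces having unbounded projections to the $x$-axis. Such a chain is wide if it intersects every vertical line. For a wide chain $A$, the upside of $A$ is the unique connected component of $\mathbb R^2\setminus A$ containing an upward vertical half-line. The disjointness graph of a family has the members as vertices, two adjacent if and only if they are disjoint. *)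

theory Defs
  imports "HOL-Analysis.Analysis"
begin

type_synonym point = "real \<times> real"

text \<open>Parameter domain of the i-th piece (i < k) of a chain parametrised by a
continuous map on the real line, with break points t 1 < ... < t (k-1).\<close>
definition piece_dom :: "nat \<Rightarrow> (nat \<Rightarrow> real) \<Rightarrow> nat \<Rightarrow> real set" where
  "piece_dom k t i = {s. (i = 0 \<or> t i \<le> s) \<and> (i = k - 1 \<or> s \<le> t (Suc i))}"

text \<open>A 2-way infinite k-monotone chain: the image of a continuous curve that is
the concatenation of k x-monotone pieces (the x-coordinate is injective along each
piece), consecutive pieces sharing the break point, the first and last pieces having
unbounded projection to the x-axis.\<close>
definition k_monotone_chain :: "nat \<Rightarrow> point set \<Rightarrow> bool" where
  "k_monotone_chain k A \<longleftrightarrow>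
     (\<exists>(\<gamma>::real \<Rightarrow> point) (t::nat \<Rightarrow> real).
        continuous_on UNIV \<gamma> \<and>
        (\<forall>i j. 1 \<le> i \<longrightarrow> i < j \<longrightarrow> j \<le> k - 1 \<longrightarrow> t i < t j) \<and>
        A = range \<gamma> \<and>
        (\<forall>i<k. inj_on (fst \<circ> \<gamma>) (piece_dom k t i)) \<and>
        \<not> bounded (fst ` \<gamma> ` piece_dom k t 0) \<and>
        \<not> bounded (fst ` \<gamma> ` piece_dom k t (k - 1)))"

definition wide :: "point set \<Rightarrow> bool" where
  "wide A \<longleftrightarrow> (\<forall>x. \<exists>p\<in>A. fst p = x)"

definition upward_halfline :: "real \<Rightarrow> real \<Rightarrow> point set" where
  "upward_halfline x y = {(x, y') | y'. y \<le> y'}"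

definition upside :: "point set \<Rightarrow> point set" where
  "upside A = (THE U. U \<in> components (- A) \<and> (\<exists>x y. upward_halfline x y \<subseteq> U))"

definition higher :: "point set \<Rightarrow> point set \<Rightarrow> bool" where
  "higher A B \<longleftrightarrow> B \<subseteq> upside A"

definition disj_edge :: "'a set set \<Rightarrow> 'a set \<Rightarrow> 'a set \<Rightarrow> bool" where
  "disj_edge F A B \<longleftrightarrow> A \<in> F \<and> B \<in> F \<and> A \<noteq> B \<and> A \<inter> B = {}"

definition comparability_graph :: "'a set \<Rightarrow> ('a \<Rightarrow> 'a \<Rightarrow> bool) \<Rightarrow> bool" where
  "comparability_graph V E \<longleftrightarrow>
     (\<exists>R. (\<forall>a\<in>V. \<not> R a a) \<and>
          (\<forall>a\<in>V. \<forall>b\<in>V. \<forall>c\<in>V. R a b \<and> R b c \<longrightarrow> R a c) \<and>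
          (\<forall>a\<in>V. \<forall>b\<in>V. a \<noteq> b \<longrightarrow> (E a b \<longleftrightarrow> R a b \<or> R b a)))"

definition chromatic_number :: "'a set \<Rightarrow> ('a \<Rightarrow> 'a \<Rightarrow> bool) \<Rightarrow> nat" where
  "chromatic_number V E = (LEAST n. \<exists>c::'a \<Rightarrow> nat. (\<forall>v\<in>V. c v < n) \<and>
        (\<forall>u\<in>V. \<forall>v\<in>V. E u v \<longrightarrow> c u \<noteq> c v))"

definition clique_number :: "'a set \<Rightarrow> ('a \<Rightarrow> 'a \<Rightarrow> bool) \<Rightarrow> nat" where
  "clique_number V E = Max {card C | C. C \<subseteq> V \<and> (\<forall>u\<in>C. \<forall>v\<in>C. u \<noteq> v \<longrightarrow> E u v)}"

end

theory Submission
  imports Defs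
begin


lemma dich_left:
  fixes f :: "real \<Rightarrow> real"
  assumes "continuous_on UNIV f" "inj_on f {..s0}"
  shows "(\<forall>s s'. s \<le> s0 \<longrightarrow> s' \<le> s0 \<longrightarrow> s < s' \<longrightarrow> f s < f s') \<or>
         (\<forall>s s'. s \<le> s0 \<longrightarrow> s' \<le> s0 \<longrightarrow> s < s' \<longrightarrow> f s > f s')"
proof -
  have "strict_mono_on {..s0} f \<or> strict_antimono_on {..s0} f"
    using injective_eq_monotone_map[of "{..s0}" f] assms continuous_on_subset
    by (metis is_interval_ic subset_UNIV)
  then show ?thesis unfolding monotone_on_def by auto
qed

lemma dich_right:
  fixes f :: "real \<Rightarrow> real"
  assumes "continuous_on UNIV f" "inj_on f {s1..}"
  shows "(\<forall>s s'. s1 \<le> s \<longrightarrow> s1 \<le> s' \<longrightarrow> s < s' \<longrightarrow> f s < f s') \<or>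
         (\<forall>s s'. s1 \<le> s \<longrightarrow> s1 \<le> s' \<longrightarrow> s < s' \<longrightarrow> f s > f s')"
proof -
  have "strict_mono_on {s1..} f \<or> strict_antimono_on {s1..} f"
    using injective_eq_monotone_map[of "{s1..}" f] assms continuous_on_subset
    by (metis is_interval_ci subset_UNIV)
  then show ?thesis unfolding monotone_on_def by auto
qed

lemma end_left:
  fixes f :: "real \<Rightarrow> real"
  assumes "continuous_on UNIV f" "inj_on f {..s0}" "\<not> bounded (f ` {..s0})"
  shows "\<exists>N. \<forall>s\<le>N. c < \<bar>f s\<bar>"
proof -
  from dich_left[OF assms(1,2)] show ?thesis
  proof
    assume inc: "\<forall>s s'. s \<le> s0 \<longrightarrow> s' \<le> s0 \<longrightarrow> s < s' \<longrightarrow> f s < f s'"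
    have le: "s \<le> s0 \<Longrightarrow> f s \<le> f s0" for s using inc by (metis less_eq_real_def)
    have "\<exists>s\<le>s0. f s < - c"
    proof (rule ccontr)
      assume "\<not> ?thesis"
      hence "\<forall>x\<in>f ` {..s0}. norm x \<le> max \<bar>c\<bar> \<bar>f s0\<bar>" using le by fastforce
      thus False using assms(3) bounded_iff by blast
    qed
    then obtain s where s: "s \<le> s0" "f s < -c" by blast
    have "\<forall>s'\<le>s. c < \<bar>f s'\<bar>"
    proof (intro allI impI)
      fix s' assume "s' \<le> s"
      hence "f s' \<le> f s" using inc s by (metis less_eq_real_def order.trans)
      thus "c < \<bar>f s'\<bar>" using s by linarith
    qed
    thus ?thesis by blast
  next
    assume dec: "\<forall>s s'. s \<le> s0 \<longrightarrow> s' \<le> s0 \<longrightarrow> s < s' \<longrightarrow> f s > f s'"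
    have le: "s \<le> s0 \<Longrightarrow> f s \<ge> f s0" for s using dec by (metis less_eq_real_def)
    have "\<exists>s\<le>s0. f s > c"
    proof (rule ccontr)
      assume "\<not> ?thesis"
      hence "\<forall>x\<in>f ` {..s0}. norm x \<le> max \<bar>c\<bar> \<bar>f s0\<bar>" using le by fastforce
      thus False using assms(3) bounded_iff by blast
    qed
    then obtain s where s: "s \<le> s0" "f s > c" by blast
    have "\<forall>s'\<le>s. c < \<bar>f s'\<bar>"
    proof (intro allI impI)
      fix s' assume "s' \<le> s"
      hence "f s' \<ge> f s" using dec s by (metis less_eq_real_def order.trans)
      thus "c < \<bar>f s'\<bar>" using s by linarith
    qed
    thus ?thesis by blast
  qed
qed

lemma end_right:
  fixes f :: "real \<Rightarrow> real"
  assumes "continuous_on UNIV f" "inj_on f {s1..}" "\<not> bounded (f ` {s1..})"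
  shows "\<exists>N. \<forall>s\<ge>N. c < \<bar>f s\<bar>"
proof -
  let ?g = "\<lambda>s. f (- s)"
  have cg: "continuous_on UNIV ?g" using assms(1)
    by (intro continuous_on_compose2[OF assms(1)]) (auto intro: continuous_intros)
  have i: "inj_on ?g {..-s1}" using assms(2) unfolding inj_on_def by force
  have im: "?g ` {..-s1} = f ` {s1..}"
  proof
    show "?g ` {..-s1} \<subseteq> f ` {s1..}" by auto
    show "f ` {s1..} \<subseteq> ?g ` {..-s1}"
    proof
      fix y assume "y \<in> f ` {s1..}"
      then obtain s where "s \<ge> s1" "y = f s" by auto
      thus "y \<in> ?g ` {..-s1}" by (intro image_eqI[of _ _ "-s"]) auto
    qed
  qed
  obtain N where N: "\<forall>s\<le>N. c < \<bar>?g s\<bar>" using end_left[OF cg i, of c] im assms(3) by auto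
  show ?thesis
  proof (intro exI[of _ "-N"] allI impI)
    fix s assume "s \<ge> -N"
    thus "c < \<bar>f s\<bar>" using N[rule_format, of "-s"] by auto
  qed
qed



lemma gen_chain:
  fixes f :: "real \<Rightarrow> real"
  assumes cont: "continuous_on UNIV f" and s01: "s0 \<le> s1"
    and iL: "inj_on f {..s0}" and iR: "inj_on f {s1..}" and sj: "surj f"
  shows "\<forall>c. bounded {s. \<bar>f s\<bar> \<le> c}"
    and "\<exists>M. \<forall>s s'. f s = f s' \<and> M \<le> f s \<longrightarrow> s = s'"
proof -
  have "compact (f ` {s0..s1})"
    by (rule compact_continuous_image) (auto intro: continuous_on_subset[OF cont])
  then obtain X0 where X0: "\<forall>x\<in>f ` {s0..s1}. norm x \<le> X0"
    using compact_imp_bounded bounded_iff by metis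
  hence X0': "s0 \<le> s \<Longrightarrow> s \<le> s1 \<Longrightarrow> \<bar>f s\<bar> \<le> X0" for s by auto
  have fs0: "\<bar>f s0\<bar> \<le> X0" and fs1: "\<bar>f s1\<bar> \<le> X0" using X0' s01 by auto
  have nb: False if lo: "\<forall>s. f s \<ge> -T" for T
  proof -
    obtain s where "f s = -T - 1" using sj by (metis surj_def)
    thus False using lo[rule_format, of s] by linarith
  qed
  have nb2: False if hi: "\<forall>s. f s \<le> T" for T
  proof -
    obtain s where "f s = T + 1" using sj by (metis surj_def)
    thus False using hi[rule_format, of s] by linarith
  qed
  have unbL: "\<not> bounded (f ` {..s0})"
  proof
    assume "bounded (f ` {..s0})"
    then obtain B where "\<forall>x\<in>f ` {..s0}. norm x \<le> B" unfolding bounded_iff by blast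
    hence B: "\<forall>s\<le>s0. \<bar>f s\<bar> \<le> B" by auto
    from dich_right[OF cont iR] show False
    proof
      assume inc: "\<forall>s s'. s1 \<le> s \<longrightarrow> s1 \<le> s' \<longrightarrow> s < s' \<longrightarrow> f s < f s'"
      have "\<forall>s. f s \<ge> -(B + X0)"
      proof
        fix s
        show "f s \<ge> -(B + X0)"
        proof (cases "s \<le> s0")
          case True thus ?thesis using B[rule_format, OF True] fs0 by linarith
        next
          case F: False
          show ?thesis
          proof (cases "s \<le> s1")
            case True hence "\<bar>f s\<bar> \<le> X0" using F X0'[of s] by auto
            thus ?thesis using B[rule_format, of s0] B[rule_format, of s1] s01 by auto
          next
            case False
            hence "f s1 < f s" using inc by auto
            thus ?thesis using fs0 fs1 B[rule_format, of s0] B[rule_format, of s1] s01 by auto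
          qed
        qed
      qed
      thus False using nb by blast
    next
      assume dec: "\<forall>s s'. s1 \<le> s \<longrightarrow> s1 \<le> s' \<longrightarrow> s < s' \<longrightarrow> f s > f s'"
      have "\<forall>s. f s \<le> (B + X0)"
      proof
        fix s
        show "f s \<le> (B + X0)"
        proof (cases "s \<le> s0")
          case True thus ?thesis using B[rule_format, OF True] fs0 by linarith
        next
          case F: False
          show ?thesis
          proof (cases "s \<le> s1")
            case True hence "\<bar>f s\<bar> \<le> X0" using F X0'[of s] by auto
            thus ?thesis using B[rule_format, of s0] B[rule_format, of s1] s01 by auto
          next
            case False
            hence "f s1 > f s" using dec by auto
            thus ?thesis using fs0 fs1 B[rule_format, of s0] B[rule_format, of s1] s01 by auto
          qed
        qed
      qed
      thus False using nb2 by blast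
    qed
  qed
  have unbR: "\<not> bounded (f ` {s1..})"
  proof
    assume "bounded (f ` {s1..})"
    then obtain B where "\<forall>x\<in>f ` {s1..}. norm x \<le> B" unfolding bounded_iff by blast
    hence B: "\<forall>s\<ge>s1. \<bar>f s\<bar> \<le> B" by auto
    from dich_left[OF cont iL] show False
    proof
      assume inc: "\<forall>s s'. s \<le> s0 \<longrightarrow> s' \<le> s0 \<longrightarrow> s < s' \<longrightarrow> f s < f s'"
      have "\<forall>s. f s \<le> (B + X0)"
      proof
        fix s
        show "f s \<le> (B + X0)"
        proof (cases "s1 \<le> s")
          case True thus ?thesis using B[rule_format, OF True] fs0 by linarith
        next
          case F: False
          show ?thesis
          proof (cases "s0 \<le> s")
            case True hence "\<bar>f s\<bar> \<le> X0" using F X0'[of s] by auto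
            thus ?thesis using B[rule_format, of s0] B[rule_format, of s1] s01 by auto
          next
            case False
            hence "f s < f s0" using inc by auto
            thus ?thesis using fs0 fs1 B[rule_format, of s0] B[rule_format, of s1] s01 by auto
          qed
        qed
      qed
      thus False using nb2 by blast
    next
      assume dec: "\<forall>s s'. s \<le> s0 \<longrightarrow> s' \<le> s0 \<longrightarrow> s < s' \<longrightarrow> f s > f s'"
      have "\<forall>s. f s \<ge> -(B + X0)"
      proof
        fix s
        show "f s \<ge> -(B + X0)"
        proof (cases "s1 \<le> s")
          case True thus ?thesis using B[rule_format, OF True] fs0 by linarith
        next
          case F: False
          show ?thesis
          proof (cases "s0 \<le> s")
            case True hence "\<bar>f s\<bar> \<le> X0" using F X0'[of s] by auto
            thus ?thesis using B[rule_format, of s0] B[rule_format, of s1] s01 by auto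
          next
            case False
            hence "f s > f s0" using dec by auto
            thus ?thesis using fs0 fs1 B[rule_format, of s0] B[rule_format, of s1] s01 by auto
          qed
        qed
      qed
      thus False using nb by blast
    qed
  qed
  show "\<forall>c. bounded {s. \<bar>f s\<bar> \<le> c}"
  proof
    fix c
    obtain NL where NL: "\<forall>s\<le>NL. c < \<bar>f s\<bar>" using end_left[OF cont iL unbL] by blast
    obtain NR where NR: "\<forall>s\<ge>NR. c < \<bar>f s\<bar>" using end_right[OF cont iR unbR] by blast
    have "{s. \<bar>f s\<bar> \<le> c} \<subseteq> {NL..NR}"
    proof
      fix s assume "s \<in> {s. \<bar>f s\<bar> \<le> c}"
      hence "\<bar>f s\<bar> \<le> c" by simp
      hence "\<not> s \<le> NL" "\<not> s \<ge> NR" using NL NR by (auto simp: not_less[symmetric])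
      thus "s \<in> {NL..NR}" by auto
    qed
    thus "bounded {s. \<bar>f s\<bar> \<le> c}" using bounded_subset bounded_closed_interval by blast
  qed
  show "\<exists>M. \<forall>s s'. f s = f s' \<and> M \<le> f s \<longrightarrow> s = s'"
  proof (rule exI[of _ "X0 + 1"], intro allI impI, rule ccontr)
    have key: False if lt: "s < s'" and eq: "f s = f s'" and big: "X0 + 1 \<le> f s" for s s'
    proof -
      have o1: "s < s0 \<or> s1 < s"
      proof (rule ccontr)
        assume "\<not> ?thesis" hence "\<bar>f s\<bar> \<le> X0" using X0'[of s] by auto
        thus False using big by linarith
      qed
      have o2: "s' < s0 \<or> s1 < s'"
      proof (rule ccontr)
        assume "\<not> ?thesis" hence "\<bar>f s'\<bar> \<le> X0" using X0'[of s'] by auto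
        thus False using big eq by linarith
      qed
      have n1: "\<not> (s \<le> s0 \<and> s' \<le> s0)" using iL eq lt unfolding inj_on_def by force
      have n2: "\<not> (s1 \<le> s \<and> s1 \<le> s')" using iR eq lt unfolding inj_on_def by force
      have L: "s < s0" and R: "s1 < s'" using o1 o2 n1 n2 lt by linarith+
      have "f s > f s0" using big fs0 by linarith
      note gt0 = this
      from dich_left[OF cont iL] have decL: "\<forall>s s'. s \<le> s0 \<longrightarrow> s' \<le> s0 \<longrightarrow> s < s' \<longrightarrow> f s > f s'"
      proof
        assume inc: "\<forall>s s'. s \<le> s0 \<longrightarrow> s' \<le> s0 \<longrightarrow> s < s' \<longrightarrow> f s < f s'"
        hence "f s < f s0" using L by auto
        hence False using gt0 by linarith
        thus ?thesis ..
      next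
        assume "\<forall>s s'. s \<le> s0 \<longrightarrow> s' \<le> s0 \<longrightarrow> s < s' \<longrightarrow> f s > f s'"
        thus ?thesis .
      qed
      have "f s' > f s1" using big fs1 eq by linarith
      note gt1 = this
      from dich_right[OF cont iR] have incR: "\<forall>s s'. s1 \<le> s \<longrightarrow> s1 \<le> s' \<longrightarrow> s < s' \<longrightarrow> f s < f s'"
      proof
        assume "\<forall>s s'. s1 \<le> s \<longrightarrow> s1 \<le> s' \<longrightarrow> s < s' \<longrightarrow> f s < f s'"
        thus ?thesis .
      next
        assume dec: "\<forall>s s'. s1 \<le> s \<longrightarrow> s1 \<le> s' \<longrightarrow> s < s' \<longrightarrow> f s > f s'"
        hence "f s' < f s1" using R by auto
        hence False using gt1 by linarith
        thus ?thesis ..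
      qed
      have "\<forall>u. f u \<ge> -X0"
      proof
        fix u
        show "f u \<ge> -X0"
        proof (cases "u < s0")
          case True thus ?thesis using decL[rule_format, of u s0] fs0 by linarith
        next
          case F: False
          show ?thesis
          proof (cases "u \<le> s1")
            case True thus ?thesis using F X0'[of u] by auto
          next
            case False thus ?thesis using incR[rule_format, of s1 u] fs1 by linarith
          qed
        qed
      qed
      thus False using nb by blast
    qed
    fix s s' assume h: "f s = f s' \<and> X0 + 1 \<le> f s" "s \<noteq> s'"
    show False
    proof (cases "s < s'")
      case True thus False using key h by blast
    next
      case False hence "s' < s" using h by linarith
      thus False using key[of s' s] h by auto
    qed
  qed
qed



definition nice :: "point set \<Rightarrow> bool" where
  "nice B \<longleftrightarrow> (\<exists>\<gamma>::real \<Rightarrow> point. continuous_on UNIV \<gamma> \<and> B = range \<gamma> \<and>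
     (\<forall>c. bounded {s. \<bar>fst (\<gamma> s)\<bar> \<le> c}) \<and>
     (\<exists>M. \<forall>s s'. fst (\<gamma> s) = fst (\<gamma> s') \<and> M \<le> fst (\<gamma> s) \<longrightarrow> \<gamma> s = \<gamma> s') \<and> wide B)"

lemma chain_nice:
  assumes k: "k \<ge> 1" and ch: "k_monotone_chain k A" and w: "wide A"
  shows "nice A"
proof -
  obtain \<gamma> :: "real \<Rightarrow> point" and t where
    cont: "continuous_on UNIV \<gamma>" and tm: "\<forall>i j. 1 \<le> i \<longrightarrow> i < j \<longrightarrow> j \<le> k - 1 \<longrightarrow> t i < t j"
    and A: "A = range \<gamma>" and inj: "\<forall>i<k. inj_on (fst \<circ> \<gamma>) (piece_dom k t i)"
    using ch unfolding k_monotone_chain_def by blast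
  let ?f = "fst \<circ> \<gamma>"
  have cf: "continuous_on UNIV ?f" using cont by (intro continuous_on_compose continuous_intros) 
  have sj: "surj ?f"
  proof -
    have "\<forall>x. \<exists>s. ?f s = x" using w A unfolding wide_def by auto
    thus ?thesis by (metis surjI)
  qed
  obtain s0 s1 where s01: "s0 \<le> s1" and iL: "inj_on ?f {..s0}" and iR: "inj_on ?f {s1..}"
  proof (cases "k = 1")
    case True
    hence "piece_dom k t 0 = UNIV" unfolding piece_dom_def by auto
    hence "inj_on ?f UNIV" using inj k by (metis True less_one)
    thus ?thesis using that[of 0 0] inj_on_subset by blast
  next
    case False
    hence k2: "k \<ge> 2" using k by auto
    have d0: "piece_dom k t 0 = {..t 1}" unfolding piece_dom_def using k2 by auto
    have d1: "piece_dom k t (k - 1) = {t (k - 1)..}" unfolding piece_dom_def using k2 by auto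
    have le: "t 1 \<le> t (k - 1)"
    proof (cases "k = 2")
      case True thus ?thesis by simp
    next
      case False
      hence "1 < k - 1" using k2 by linarith
      thus ?thesis using tm[rule_format, of 1 "k - 1"] by auto
    qed
    have a: "inj_on ?f {..t 1}" using inj[rule_format, of 0] d0 k2 by simp
    have b: "inj_on ?f {t (k - 1)..}" using inj[rule_format, of "k - 1"] d1 k2 by simp
    show ?thesis using that[OF le a b] .
  qed
  note g = gen_chain[OF cf s01 iL iR sj]
  show ?thesis unfolding nice_def
    using cont A g w by (intro exI[of _ \<gamma>]) auto
qed



lemma hl_eq: "upward_halfline x y = {x} \<times> {y..}"
  unfolding upward_halfline_def by auto

lemma nice_strip:
  assumes "nice B" shows "\<exists>R. \<forall>p\<in>B. \<bar>fst p\<bar> \<le> c \<longrightarrow> \<bar>snd p\<bar> \<le> R"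
proof -
  obtain \<gamma> :: "real \<Rightarrow> point" where cont: "continuous_on UNIV \<gamma>" and B: "B = range \<gamma>"
    and pr: "\<forall>c. bounded {s. \<bar>fst (\<gamma> s)\<bar> \<le> c}"
    using assms unfolding nice_def by blast
  let ?S = "{s. \<bar>fst (\<gamma> s)\<bar> \<le> c}"
  have "compact (closure ?S)" using pr by (simp add: compact_closure)
  hence "compact (\<gamma> ` closure ?S)" using compact_continuous_image[OF continuous_on_subset[OF cont subset_UNIV]] by blast
  then obtain R where R: "\<forall>x\<in>\<gamma> ` closure ?S. norm x \<le> R" using compact_imp_bounded bounded_iff by metis
  have "\<forall>p\<in>B. \<bar>fst p\<bar> \<le> c \<longrightarrow> \<bar>snd p\<bar> \<le> R"
  proof (intro ballI impI)
    fix p assume pB: "p \<in> B" and pc: "\<bar>fst p\<bar> \<le> c"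
    obtain s where s1: "p = \<gamma> s" using pB unfolding B by blast
    have s: "p = \<gamma> s" "s \<in> ?S" using s1 pc by simp_all
    hence "s \<in> closure ?S" using s(2) by (intro subsetD[OF closure_subset])
    hence "norm p \<le> R" using R s(1) by blast
    moreover have "\<bar>snd p\<bar> \<le> norm p" using norm_snd_le[of "snd p" "fst p"] by simp
    ultimately show "\<bar>snd p\<bar> \<le> R" by linarith
  qed
  thus ?thesis by blast
qed

lemma nice_closed:
  assumes "nice B" shows "closed B"
proof -
  obtain \<gamma> :: "real \<Rightarrow> point" where cont: "continuous_on UNIV \<gamma>" and B: "B = range \<gamma>"
    and pr: "\<forall>c. bounded {s. \<bar>fst (\<gamma> s)\<bar> \<le> c}"
    using assms unfolding nice_def by blast
  have "closure B \<subseteq> B"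
  proof
    fix z assume z: "z \<in> closure B"
    define c where "c = \<bar>fst z\<bar> + 1"
    let ?S = "{s. \<bar>fst (\<gamma> s)\<bar> \<le> c}"
    have "compact (closure ?S)" using pr by (simp add: compact_closure)
    hence K: "compact (\<gamma> ` closure ?S)" using compact_continuous_image[OF continuous_on_subset[OF cont subset_UNIV]] by blast
    have sub: "ball z 1 \<inter> B \<subseteq> \<gamma> ` closure ?S"
    proof
      fix p assume p: "p \<in> ball z 1 \<inter> B"
      then obtain s where s: "p = \<gamma> s" unfolding B by blast
      have "dist (fst z) (fst p) \<le> dist z p" by (rule dist_fst_le)
      moreover have "dist z p < 1" using p by simp
      ultimately have "\<bar>fst z - fst p\<bar> < 1" unfolding dist_real_def by linarith
      hence "\<bar>fst p\<bar> \<le> c" unfolding c_def by linarith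
      hence "s \<in> ?S" using s by simp
      hence "s \<in> closure ?S" by (rule subsetD[OF closure_subset])
      thus "p \<in> \<gamma> ` closure ?S" using s by auto
    qed
    have "z \<in> ball z 1 \<inter> closure B" using z by auto
    hence "z \<in> closure (ball z 1 \<inter> B)" using open_Int_closure_subset[of "ball z 1" B] by auto
    hence "z \<in> closure (\<gamma> ` closure ?S)" using closure_mono[OF sub] by (rule subsetD[rotated])
    moreover have "closed (\<gamma> ` closure ?S)" using K by (rule compact_imp_closed)
    ultimately have "z \<in> \<gamma> ` closure ?S" by (simp add: closure_closed)
    thus "z \<in> B" using B by auto
  qed
  thus ?thesis by (simp add: closure_subset_eq)
qed

lemma nice_uniq:
  assumes "nice B" shows "\<exists>M. \<forall>p\<in>B. \<forall>q\<in>B. fst p = fst q \<and> M \<le> fst p \<longrightarrow> p = q"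
proof -
  obtain \<gamma> :: "real \<Rightarrow> point" and M where B: "B = range \<gamma>"
    and M: "\<forall>s s'. fst (\<gamma> s) = fst (\<gamma> s') \<and> M \<le> fst (\<gamma> s) \<longrightarrow> \<gamma> s = \<gamma> s'"
    using assms unfolding nice_def by blast
  have "\<forall>p\<in>B. \<forall>q\<in>B. fst p = fst q \<and> M \<le> fst p \<longrightarrow> p = q"
    unfolding B using M by blast
  thus ?thesis by blast
qed

lemma nice_connected:
  assumes "nice B" shows "connected B"
proof -
  obtain \<gamma> :: "real \<Rightarrow> point" where cont: "continuous_on UNIV \<gamma>" and B: "B = range \<gamma>"
    using assms unfolding nice_def by blast
  show ?thesis unfolding B by (rule connected_continuous_image[OF cont connected_UNIV])
qed

lemma nice_wide: "nice B \<Longrightarrow> wide B" unfolding nice_def by (elim exE conjE)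

lemma nice_ne: "nice B \<Longrightarrow> B \<noteq> {}" unfolding nice_def by (elim exE conjE) simp

lemma up_uniq:
  assumes "nice B" and U1: "U1 \<in> components (- B)" "upward_halfline x1 y1 \<subseteq> U1"
    and U2: "U2 \<in> components (- B)" "upward_halfline x2 y2 \<subseteq> U2"
  shows "U1 = U2"
proof -
  obtain R where R: "\<forall>p\<in>B. \<bar>fst p\<bar> \<le> max \<bar>x1\<bar> \<bar>x2\<bar> \<longrightarrow> \<bar>snd p\<bar> \<le> R"
    using nice_strip[OF assms(1)] by blast
  define Y where "Y = max (R + 1) (max y1 y2)"
  define T where "T = {min x1 x2..max x1 x2} \<times> {Y..}"
  have cT: "connected T" unfolding T_def
    by (intro convex_connected convex_Times convex_real_interval)
  have TB: "T \<subseteq> - B"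
  proof
    fix p assume "p \<in> T"
    hence h: "\<bar>fst p\<bar> \<le> max \<bar>x1\<bar> \<bar>x2\<bar>" "snd p \<ge> R + 1" unfolding T_def Y_def by auto
    show "p \<in> - B"
    proof
      assume "p \<in> B" hence "\<bar>snd p\<bar> \<le> R" using R h(1) by blast
      thus False using h(2) by linarith
    qed
  qed
  have "(x1, Y) \<in> T \<inter> U1" using U1 unfolding T_def Y_def hl_eq by auto
  hence "T \<subseteq> U1" using components_maximal[OF U1(1) cT TB] by blast
  moreover have "(x2, Y) \<in> T \<inter> U2" using U2 unfolding T_def Y_def hl_eq by auto
  hence "T \<subseteq> U2" using components_maximal[OF U2(1) cT TB] by blast
  moreover have "(x1, Y) \<in> T" unfolding T_def Y_def by auto
  ultimately have "U1 \<inter> U2 \<noteq> {}" by blast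
  thus ?thesis using components_eq[OF U1(1) U2(1)] by blast
qed

lemma up_exists:
  assumes "nice B"
  shows "\<exists>U. U \<in> components (- B) \<and> (\<exists>x y. upward_halfline x y \<subseteq> U)"
proof -
  obtain R where R: "\<forall>p\<in>B. \<bar>fst p\<bar> \<le> 0 \<longrightarrow> \<bar>snd p\<bar> \<le> R"
    using nice_strip[OF assms(1)] by blast
  let ?H = "upward_halfline 0 (R + 1)"
  have cH: "connected ?H" unfolding hl_eq
    by (intro convex_connected convex_Times convex_real_interval convex_singleton)
  have HB: "?H \<subseteq> - B"
  proof
    fix p assume "p \<in> ?H"
    hence h: "fst p = 0" "snd p \<ge> R + 1" unfolding hl_eq by auto
    show "p \<in> - B"
    proof
      assume "p \<in> B" hence "\<bar>snd p\<bar> \<le> R" using R h(1) by simp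
      thus False using h(2) by linarith
    qed
  qed
  have "(0, R + 1) \<in> ?H" unfolding hl_eq by auto
  hence "- B \<noteq> {}" using HB by blast
  then obtain U where "U \<in> components (- B)" "?H \<subseteq> U"
    using exists_component_superset[OF HB _ cH] by blast
  thus ?thesis by blast
qed

lemma upside_prop:
  assumes "nice B"
  shows "upside B \<in> components (- B) \<and> (\<exists>x y. upward_halfline x y \<subseteq> upside B)"
proof -
  obtain U where U: "U \<in> components (- B) \<and> (\<exists>x y. upward_halfline x y \<subseteq> U)"
    using up_exists[OF assms] by blast
  have "upside B = U" unfolding upside_def
  proof (rule the_equality)
    show "U \<in> components (- B) \<and> (\<exists>x y. upward_halfline x y \<subseteq> U)" by (rule U)
    fix V assume "V \<in> components (- B) \<and> (\<exists>x y. upward_halfline x y \<subseteq> V)"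
    then obtain x y where V: "V \<in> components (- B)" "upward_halfline x y \<subseteq> V" by blast
    obtain x' y' where U': "U \<in> components (- B)" "upward_halfline x' y' \<subseteq> U" using U by blast
    show "V = U" using up_uniq[OF assms V U'] .
  qed
  thus ?thesis using U by simp
qed

lemma upside_eq:
  assumes "nice B" "U \<in> components (- B)" "upward_halfline x y \<subseteq> U"
  shows "upside B = U"
proof -
  obtain x' y' where U': "upside B \<in> components (- B)" "upward_halfline x' y' \<subseteq> upside B"
    using upside_prop[OF assms(1)] by blast
  show ?thesis using up_uniq[OF assms(1) U' assms(2,3)] .
qed

lemma upside_sub: "nice B \<Longrightarrow> upside B \<subseteq> - B"
  using upside_prop[of B] in_components_subset[of "upside B" "- B"] by simp

lemma up_above:
  assumes "nice B" and M: "\<forall>p\<in>B. \<forall>q\<in>B. fst p = fst q \<and> M \<le> fst p \<longrightarrow> p = q"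
    and p: "p \<in> B" "M \<le> fst p" and q: "fst q = fst p" "snd q > snd p"
  shows "q \<in> upside B"
proof -
  let ?H = "upward_halfline (fst q) (snd q)"
  have cH: "connected ?H" unfolding hl_eq
    by (intro convex_connected convex_Times convex_real_interval convex_singleton)
  have HB: "?H \<subseteq> - B"
  proof
    fix r assume r: "r \<in> ?H"
    show "r \<in> - B"
    proof
      assume "r \<in> B"
      moreover have "fst r = fst p" "snd r \<ge> snd q" using r q unfolding hl_eq by auto
      ultimately have "r = p" using M[rule_format, of r p] p by simp
      thus False using \<open>snd r \<ge> snd q\<close> q by simp
    qed
  qed
  have qH: "q \<in> ?H" unfolding hl_eq by (cases q) auto
  then obtain U where U: "U \<in> components (- B)" "?H \<subseteq> U"
    using exists_component_superset[OF HB _ cH] HB by auto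
  have "upside B = U" by (rule upside_eq[OF assms(1) U])
  thus ?thesis using U qH by blast
qed



definition e2 :: "point \<Rightarrow> real^2" where
  "e2 p = (\<chi> i. if i = 1 then fst p else snd p)"

lemma e2_1 [simp]: "(e2 p)$1 = fst p" unfolding e2_def by simp
lemma e2_2 [simp]: "(e2 p)$2 = snd p" unfolding e2_def by simp

lemma e2_inj: "e2 p = e2 q \<Longrightarrow> p = q"
  by (metis e2_1 e2_2 prod_eq_iff)

lemma e2_cont: "continuous_on S e2"
  unfolding e2_def
proof (intro continuous_on_vec_lambda)
  fix i :: 2
  show "continuous_on S (\<lambda>x. if i = 1 then fst x else snd x)"
    by (cases "i = 1") (simp_all add: continuous_on_fst continuous_on_snd continuous_on_id)
qed

lemma e2_cbox: "e2 p \<in> cbox (e2 (a1, a2)) (e2 (b1, b2)) \<longleftrightarrow> a1 \<le> fst p \<and> fst p \<le> b1 \<and> a2 \<le> snd p \<and> snd p \<le> b2"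
  unfolding mem_box_cart(2) forall_2 by simp

lemma fashoda_prod:
  fixes f g :: "real \<Rightarrow> point"
  assumes "path f" "path g"
    and fb: "\<forall>p\<in>path_image f. a1 \<le> fst p \<and> fst p \<le> b1 \<and> a2 \<le> snd p \<and> snd p \<le> b2"
    and gb: "\<forall>p\<in>path_image g. a1 \<le> fst p \<and> fst p \<le> b1 \<and> a2 \<le> snd p \<and> snd p \<le> b2"
    and "fst (pathstart f) = a1" "fst (pathfinish f) = b1"
    and "snd (pathstart g) = a2" "snd (pathfinish g) = b2"
  shows "\<exists>z. z \<in> path_image f \<and> z \<in> path_image g"
proof -
  have pf: "path (e2 \<circ> f)" using assms(1) unfolding path_def
    by (intro continuous_on_compose e2_cont)
  have pg: "path (e2 \<circ> g)" using assms(2) unfolding path_def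
    by (intro continuous_on_compose e2_cont)
  have imf: "path_image (e2 \<circ> f) = e2 ` path_image f" by (simp add: path_image_compose)
  have img: "path_image (e2 \<circ> g) = e2 ` path_image g" by (simp add: path_image_compose)
  have sf: "path_image (e2 \<circ> f) \<subseteq> cbox (e2 (a1, a2)) (e2 (b1, b2))"
    unfolding imf using fb e2_cbox by blast
  have sg: "path_image (e2 \<circ> g) \<subseteq> cbox (e2 (a1, a2)) (e2 (b1, b2))"
    unfolding img using gb e2_cbox by blast
  obtain z where z: "z \<in> path_image (e2 \<circ> f)" "z \<in> path_image (e2 \<circ> g)"
    apply (rule fashoda[OF pf pg sf sg])
    using assms(5-8) by (auto simp: pathstart_compose pathfinish_compose)
  then obtain u v where "u \<in> path_image f" "v \<in> path_image g" "z = e2 u" "z = e2 v"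
    unfolding imf img by blast
  thus ?thesis using e2_inj by metis
qed



lemma clamp_bounds: "0 \<le> (X::real) \<Longrightarrow> -X \<le> max (-X) (min X a) \<and> max (-X) (min X a) \<le> X"
  by (auto simp: max_def min_def)

lemma clamp_id: "\<bar>a\<bar> \<le> (X::real) \<Longrightarrow> max (-X) (min X a) = a"
  by (auto simp: max_def min_def)

lemma clamp_out: "\<not> \<bar>a\<bar> \<le> (X::real) \<Longrightarrow> 0 \<le> X \<Longrightarrow> max (-X) (min X a) = X \<or> max (-X) (min X a) = -X"
  by (auto simp: max_def min_def)

lemma up_below:
  assumes nB: "nice B" and M: "\<forall>p\<in>B. \<forall>q\<in>B. fst p = fst q \<and> M \<le> fst p \<longrightarrow> p = q"
    and p: "p \<in> B" "M \<le> fst p" and q: "fst q = fst p" "snd q < snd p"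
  shows "q \<notin> upside B"
proof
  assume qU: "q \<in> upside B"
  let ?U = "upside B"
  obtain x0 y0 where Uc: "?U \<in> components (- B)" and H: "upward_halfline x0 y0 \<subseteq> ?U"
    using upside_prop[OF nB] by blast
  have UB: "?U \<subseteq> - B" using in_components_subset[OF Uc] .
  have oU: "open ?U" using open_components[OF _ Uc] nice_closed[OF nB] by blast
  have cU: "connected ?U" using in_components_connected[OF Uc] .
  have pcU: "path_connected ?U" using connected_open_path_connected[OF oU cU] .
  have x0U: "(x0, y0) \<in> ?U" using H unfolding hl_eq by auto
  obtain g where g: "path g" "path_image g \<subseteq> ?U" "pathstart g = q" "pathfinish g = (x0, y0)"
    using pcU qU x0U unfolding path_connected_def by blast
  have "bounded (path_image g)" using compact_path_image[OF g(1)] by (rule compact_imp_bounded)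
  then obtain K where K: "\<forall>z\<in>path_image g. norm z \<le> K" unfolding bounded_iff by blast
  have Kf: "\<bar>fst z\<bar> \<le> K" if "z \<in> path_image g" for z
  proof -
    have "\<bar>fst z\<bar> \<le> norm z" using norm_fst_le[of "fst z" "snd z"] by simp
    thus ?thesis using K that by fastforce
  qed
  define x where "x = fst p"
  define X where "X = max K (max \<bar>x\<bar> \<bar>x0\<bar>) + 1"
  have qg: "q \<in> path_image g" using g(3) pathstart_in_path_image by metis
  have K0: "0 \<le> K" using Kf[OF qg] by linarith
  have Xpos: "X > 0" unfolding X_def using K0 by linarith
  obtain R where R: "\<forall>b\<in>B. \<bar>fst b\<bar> \<le> X \<longrightarrow> \<bar>snd b\<bar> \<le> R" using nice_strip[OF nB] by blast
  define R' where "R' = max (max R K) (max \<bar>snd q\<bar> \<bar>y0\<bar>) + 1"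
  have XK: "K + 1 \<le> X" "\<bar>x\<bar> + 1 \<le> X" "\<bar>x0\<bar> + 1 \<le> X" unfolding X_def by (simp_all add: le_max_iff_disj)
  have RK: "R + 1 \<le> R'" "K + 1 \<le> R'" "\<bar>snd q\<bar> + 1 \<le> R'" "\<bar>y0\<bar> + 1 \<le> R'"
    unfolding R'_def by (simp_all add: le_max_iff_disj)
  have Kg: "\<bar>snd z\<bar> \<le> K" if "z \<in> path_image g" for z
  proof -
    have "\<bar>snd z\<bar> \<le> norm z" using norm_snd_le[of "snd z" "fst z"] by simp
    thus ?thesis using K that by fastforce
  qed
  let ?h1 = "linepath (x, -R') q"
  let ?h3 = "linepath (x0, y0) (x0, R')"
  let ?h = "?h1 +++ (g +++ ?h3)"
  have q_eq: "q = (x, snd q)" using q(1) unfolding x_def by (cases q) simp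
  have seg1: "path_image ?h1 \<subseteq> {x} \<times> {-R'..snd q}"
    unfolding path_image_linepath
  proof (rule closed_segment_subset)
    show "(x, -R') \<in> {x} \<times> {-R'..snd q}" using RK by auto
    have "fst q = x" using q(1) unfolding x_def by simp
    moreover have "-R' \<le> snd q" using RK by linarith
    ultimately show "q \<in> {x} \<times> {-R'..snd q}" by (simp add: mem_Times_iff)
    show "convex ({x} \<times> {-R'..snd q})" by (intro convex_Times convex_singleton convex_real_interval)
  qed
  have seg3: "path_image ?h3 \<subseteq> {x0} \<times> {y0..R'}"
    unfolding path_image_linepath
  proof (rule closed_segment_subset)
    show "(x0, y0) \<in> {x0} \<times> {y0..R'}" using RK by auto
    show "(x0, R') \<in> {x0} \<times> {y0..R'}" using RK by auto
    show "convex ({x0} \<times> {y0..R'})" by (intro convex_Times convex_singleton convex_real_interval)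
  qed
  have ph: "path ?h" using g by (intro path_join_imp) auto
  have pih: "path_image ?h \<subseteq> path_image ?h1 \<union> path_image g \<union> path_image ?h3"
    using path_image_join_subset[of ?h1 "g +++ ?h3"] path_image_join_subset[of g ?h3] by blast
  have hB: "z \<notin> B" if "z \<in> path_image ?h" for z
  proof -
    have zz: "z \<in> path_image ?h1 \<union> path_image g \<union> path_image ?h3" using subsetD[OF pih that] .
    then consider "z \<in> path_image ?h1" | "z \<in> path_image g" | "z \<in> path_image ?h3" by blast
    thus ?thesis
    proof cases
      case 1
      have "z \<in> {x} \<times> {-R'..snd q}" using subsetD[OF seg1 1] .
      hence z: "fst z = x" "snd z \<le> snd q" by (simp_all add: mem_Times_iff)
      show ?thesis
      proof
        assume "z \<in> B"
        hence "z = p" using M[rule_format, of z p] p z unfolding x_def by simp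
        thus False using z q by simp
      qed
    next
      case 2 thus ?thesis using g(2) UB by blast
    next
      case 3
      have "z \<in> {x0} \<times> {y0..R'}" using subsetD[OF seg3 3] .
      hence "z \<in> upward_halfline x0 y0" unfolding hl_eq by (simp add: mem_Times_iff)
      thus ?thesis using H UB by blast
    qed
  qed
  have hbox: "\<forall>z\<in>path_image ?h. \<bar>fst z\<bar> < X \<and> \<bar>snd z\<bar> \<le> R'"
  proof
    fix z assume "z \<in> path_image ?h"
    then consider "z \<in> path_image ?h1" | "z \<in> path_image g" | "z \<in> path_image ?h3" using pih by blast
    thus "\<bar>fst z\<bar> < X \<and> \<bar>snd z\<bar> \<le> R'"
    proof cases
      case 1
      have "z \<in> {x} \<times> {-R'..snd q}" using subsetD[OF seg1 1] .
      hence "fst z = x" "-R' \<le> snd z" "snd z \<le> snd q" by (simp_all add: mem_Times_iff)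
      thus ?thesis using XK RK by linarith
    next
      case 2
      thus ?thesis using Kf[OF 2] Kg[OF 2] XK RK by linarith
    next
      case 3
      have "z \<in> {x0} \<times> {y0..R'}" using subsetD[OF seg3 3] .
      hence "fst z = x0" "y0 \<le> snd z" "snd z \<le> R'" by (simp_all add: mem_Times_iff)
      thus ?thesis using XK RK by linarith
    qed
  qed
  obtain \<gamma> :: "real \<Rightarrow> point" where cont: "continuous_on UNIV \<gamma>" and Bg: "B = range \<gamma>"
    and wB: "wide B"
    using nB unfolding nice_def by blast
  obtain b1 where b1: "b1 \<in> B" "fst b1 = -X" using wB unfolding wide_def by blast
  obtain b2 where b2: "b2 \<in> B" "fst b2 = X" using wB unfolding wide_def by blast
  obtain sa where sa: "b1 = \<gamma> sa" using b1(1) unfolding Bg by blast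
  obtain sb where sb: "b2 = \<gamma> sb" using b2(1) unfolding Bg by blast
  define cl where "cl = (\<lambda>z::point. (max (-X) (min X (fst z)), max (-R') (min R' (snd z))))"
  define \<beta> where "\<beta> = cl \<circ> (\<gamma> \<circ> linepath sa sb)"
  have ccl: "continuous_on S cl" for S unfolding cl_def by (intro continuous_intros)
  have pb: "path \<beta>" unfolding \<beta>_def path_def
    by (intro continuous_on_compose ccl continuous_on_subset[OF cont] subset_UNIV continuous_on_linepath)
  have R'pos: "R' > 0" using RK by linarith
  have bbox: "\<forall>z\<in>path_image \<beta>. -X \<le> fst z \<and> fst z \<le> X \<and> -R' \<le> snd z \<and> snd z \<le> R'"
  proof
    fix z assume "z \<in> path_image \<beta>"
    then obtain w where "z = cl w" unfolding \<beta>_def path_image_compose by blast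
    thus "-X \<le> fst z \<and> fst z \<le> X \<and> -R' \<le> snd z \<and> snd z \<le> R'"
      unfolding cl_def using clamp_bounds[of X "fst w"] clamp_bounds[of R' "snd w"] Xpos R'pos by simp
  qed
  have hbox': "\<forall>z\<in>path_image ?h. -X \<le> fst z \<and> fst z \<le> X \<and> -R' \<le> snd z \<and> snd z \<le> R'"
  proof
    fix z assume "z \<in> path_image ?h"
    hence "\<bar>fst z\<bar> < X \<and> \<bar>snd z\<bar> \<le> R'" using hbox by blast
    thus "-X \<le> fst z \<and> fst z \<le> X \<and> -R' \<le> snd z \<and> snd z \<le> R'" by linarith
  qed
  have sb1: "fst (pathstart \<beta>) = -X" unfolding \<beta>_def pathstart_compose cl_def
    using b1 sa clamp_id[of "-X" X] Xpos by simp
  have sb2: "fst (pathfinish \<beta>) = X" unfolding \<beta>_def pathfinish_compose cl_def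
    using b2 sb clamp_id[of X X] Xpos by simp
  have sh1: "snd (pathstart ?h) = -R'" by simp
  have sh2: "snd (pathfinish ?h) = R'" by simp
  obtain z where z: "z \<in> path_image \<beta>" "z \<in> path_image ?h"
    using fashoda_prod[OF pb ph bbox hbox' sb1 sb2 sh1 sh2] by blast
  obtain w where w: "w \<in> B" "z = cl w"
    using z(1) unfolding \<beta>_def path_image_compose Bg by blast
  have zX: "\<bar>fst z\<bar> < X" using hbox z(2) by blast
  have zB: "z \<notin> B" using hB z(2) .
  show False
  proof (cases "\<bar>fst w\<bar> \<le> X")
    case True
    hence "\<bar>snd w\<bar> \<le> R" using R w(1) by blast
    moreover have "R < R'" using RK by linarith
    ultimately have "\<bar>snd w\<bar> \<le> R'" by linarith
    hence "cl w = w" unfolding cl_def using True clamp_id[of "fst w" X] clamp_id[of "snd w" R'] by simp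
    thus False using w zB by simp
  next
    case False
    hence "fst z = X \<or> fst z = -X" using w(2) clamp_out[of "fst w" X] Xpos unfolding cl_def by simp
    thus False using zX by linarith
  qed
qed



lemma cardI: "P C \<Longrightarrow> card C \<in> {card C | C. P C}"
  by auto

lemma perfect_comp:
  fixes V :: "'a set" and E R :: "'a \<Rightarrow> 'a \<Rightarrow> bool"
  assumes fin: "finite V" and irr: "\<forall>a\<in>V. \<not> R a a"
    and tr: "\<forall>a\<in>V. \<forall>b\<in>V. \<forall>c\<in>V. R a b \<and> R b c \<longrightarrow> R a c"
    and Eiff: "\<forall>a\<in>V. \<forall>b\<in>V. a \<noteq> b \<longrightarrow> (E a b \<longleftrightarrow> R a b \<or> R b a)"
    and Eirr: "\<forall>a\<in>V. \<not> E a a"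
  shows "chromatic_number V E = clique_number V E"
proof -
  define Cl where "Cl = {card C | C. C \<subseteq> V \<and> (\<forall>u\<in>C. \<forall>v\<in>C. u \<noteq> v \<longrightarrow> E u v)}"
  define \<omega> where "\<omega> = Max Cl"
  have om: "clique_number V E = \<omega>" unfolding clique_number_def \<omega>_def Cl_def ..
  have Clfin: "finite Cl"
  proof (rule finite_subset)
    show "Cl \<subseteq> {..card V}"
    proof
      fix k assume "k \<in> Cl"
      then obtain C where "k = card C" "C \<subseteq> V" unfolding Cl_def by auto
      thus "k \<in> {..card V}" using card_mono[OF fin, of C] by simp
    qed
  qed simp
  have Clne: "({}::'a set) \<subseteq> V \<and> (\<forall>u\<in>{}. \<forall>v\<in>{}. u \<noteq> v \<longrightarrow> E u v)" by simp
  hence "card ({}::'a set) \<in> Cl" unfolding Cl_def by (rule cardI[where P="\<lambda>C. C \<subseteq> V \<and> (\<forall>u\<in>C. \<forall>v\<in>C. u \<noteq> v \<longrightarrow> E u v)"])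
  hence Clne': "Cl \<noteq> {}" by blast
  have cl_le: "card C \<le> \<omega>" if "C \<subseteq> V" "\<forall>u\<in>C. \<forall>v\<in>C. u \<noteq> v \<longrightarrow> E u v" for C
  proof -
    have "C \<subseteq> V \<and> (\<forall>u\<in>C. \<forall>v\<in>C. u \<noteq> v \<longrightarrow> E u v)" using that by simp
    hence "card C \<in> Cl" unfolding Cl_def by (rule cardI[where P="\<lambda>C. C \<subseteq> V \<and> (\<forall>u\<in>C. \<forall>v\<in>C. u \<noteq> v \<longrightarrow> E u v)"])
    thus ?thesis unfolding \<omega>_def using Clfin by simp
  qed
  define P where "P = (\<lambda>n. \<exists>c::'a \<Rightarrow> nat. (\<forall>v\<in>V. c v < n) \<and> (\<forall>u\<in>V. \<forall>v\<in>V. E u v \<longrightarrow> c u \<noteq> c v))"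
  have chi: "chromatic_number V E = (LEAST n. P n)" unfolding chromatic_number_def P_def ..
  have low: "\<omega> \<le> n" if "P n" for n
  proof -
    obtain c where c: "\<forall>v\<in>V. c v < n" "\<forall>u\<in>V. \<forall>v\<in>V. E u v \<longrightarrow> c u \<noteq> c v"
      using \<open>P n\<close> unfolding P_def by blast
    have "\<forall>k\<in>Cl. k \<le> n"
    proof
      fix k assume "k \<in> Cl"
      then obtain C where C: "k = card C" "C \<subseteq> V" "\<forall>u\<in>C. \<forall>v\<in>C. u \<noteq> v \<longrightarrow> E u v"
        unfolding Cl_def by auto
      have "inj_on c C"
      proof (rule inj_onI)
        fix u v assume "u \<in> C" "v \<in> C" "c u = c v"
        show "u = v"
        proof (rule ccontr)
          assume "u \<noteq> v"
          hence "E u v" using C(3) \<open>u \<in> C\<close> \<open>v \<in> C\<close> by blast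
          moreover have "u \<in> V" "v \<in> V" using C(2) \<open>u \<in> C\<close> \<open>v \<in> C\<close> by auto
          ultimately have "c u \<noteq> c v" using c(2) by blast
          thus False using \<open>c u = c v\<close> by simp
        qed
      qed
      hence "card C = card (c ` C)" by (simp add: card_image)
      also have "\<dots> \<le> card {..<n}"
      proof (rule card_mono)
        show "c ` C \<subseteq> {..<n}" using C(2) c(1) by auto
      qed simp
      finally show "k \<le> n" using C by simp
    qed
    thus ?thesis unfolding \<omega>_def using Clfin Clne' by simp
  qed
  define D where "D = (\<lambda>v. {card C | C. C \<subseteq> V \<and> v \<in> C \<and> (\<forall>u\<in>C. u \<noteq> v \<longrightarrow> R u v) \<and>
                         (\<forall>u\<in>C. \<forall>w\<in>C. u \<noteq> w \<longrightarrow> E u w)})"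
  define h where "h = (\<lambda>v. Max (D v))"
  have Dfin: "finite (D v)" for v
  proof (rule finite_subset)
    show "D v \<subseteq> {..card V}"
    proof
      fix k assume "k \<in> D v"
      then obtain C where "k = card C" "C \<subseteq> V" unfolding D_def by auto
      thus "k \<in> {..card V}" using card_mono[OF fin, of C] by simp
    qed
  qed simp
  have Dsing: "1 \<in> D v" if "v \<in> V" for v
  proof -
    have "{v} \<subseteq> V \<and> v \<in> {v} \<and> (\<forall>u\<in>{v}. u \<noteq> v \<longrightarrow> R u v) \<and> (\<forall>u\<in>{v}. \<forall>w\<in>{v}. u \<noteq> w \<longrightarrow> E u w)"
      using that by simp
    hence "card {v} \<in> D v" unfolding D_def by (rule cardI[where P="\<lambda>C. C \<subseteq> V \<and> v \<in> C \<and> (\<forall>u\<in>C. u \<noteq> v \<longrightarrow> R u v) \<and> (\<forall>u\<in>C. \<forall>w\<in>C. u \<noteq> w \<longrightarrow> E u w)"])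
    thus ?thesis by simp
  qed
  have h1: "1 \<le> h v" if "v \<in> V" for v
    unfolding h_def using Max_ge[OF Dfin Dsing[OF that]] .
  have hom: "h v \<le> \<omega>" if "v \<in> V" for v
  proof -
    have "D v \<noteq> {}" using Dsing[OF that] by blast
    moreover have "\<forall>k\<in>D v. k \<le> \<omega>"
    proof
      fix k assume "k \<in> D v"
      then obtain C where CC: "k = card C" "C \<subseteq> V" "\<forall>u\<in>C. \<forall>w\<in>C. u \<noteq> w \<longrightarrow> E u w"
        unfolding D_def by auto
      show "k \<le> \<omega>" using cl_le[OF CC(2,3)] CC(1) by simp
    qed
    ultimately show ?thesis unfolding h_def using Dfin by simp
  qed
  have hlt: "h u < h v" if uv: "u \<in> V" "v \<in> V" "R u v" for u v
  proof -
    have "D u \<noteq> {}" using Dsing[OF uv(1)] by blast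
    hence "h u \<in> D u" unfolding h_def using Max_in[OF Dfin] by blast
    then obtain C where C: "h u = card C" "C \<subseteq> V" "u \<in> C" "\<forall>w\<in>C. w \<noteq> u \<longrightarrow> R w u"
       "\<forall>a\<in>C. \<forall>b\<in>C. a \<noteq> b \<longrightarrow> E a b"
      unfolding D_def by auto
    have vC: "v \<notin> C"
    proof
      assume "v \<in> C"
      have "v \<noteq> u" using uv irr by blast
      hence "R v u" using C(4) \<open>v \<in> C\<close> by blast
      hence "R v v" using tr[rule_format, of v u v] uv by blast
      thus False using irr uv by blast
    qed
    have finC: "finite C" using C(2) fin finite_subset by blast
    let ?C = "insert v C"
    have below: "\<forall>w\<in>?C. w \<noteq> v \<longrightarrow> R w v"
    proof (intro ballI impI)
      fix w assume "w \<in> ?C" "w \<noteq> v"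
      hence wC: "w \<in> C" by simp
      show "R w v"
      proof (cases "w = u")
        case True thus ?thesis using uv by simp
      next
        case False
        hence "R w u" using C(4) wC by blast
        moreover have "w \<in> V" using C(2) wC by blast
        ultimately show ?thesis using tr[rule_format, of w u v] uv by blast
      qed
    qed
    have cl: "\<forall>a\<in>?C. \<forall>b\<in>?C. a \<noteq> b \<longrightarrow> E a b"
    proof (intro ballI impI)
      fix a b assume ab: "a \<in> ?C" "b \<in> ?C" "a \<noteq> b"
      show "E a b"
      proof (cases "a = v")
        case True
        hence "b \<in> C" "b \<noteq> v" using ab by auto
        hence "R b v" using below by blast
        moreover have "b \<in> V" using C(2) \<open>b \<in> C\<close> by blast
        ultimately show ?thesis using Eiff[rule_format, of a b] True ab uv by blast
      next
        case aF: False
        show ?thesis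
        proof (cases "b = v")
          case True
          hence "a \<in> C" using ab aF by auto
          hence "R a v" using below aF by blast
          moreover have "a \<in> V" using C(2) \<open>a \<in> C\<close> by blast
          ultimately show ?thesis using Eiff[rule_format, of a b] True ab uv by blast
        next
          case False
          thus ?thesis using aF ab C(5) by auto
        qed
      qed
    qed
    have "?C \<subseteq> V \<and> v \<in> ?C \<and> (\<forall>w\<in>?C. w \<noteq> v \<longrightarrow> R w v) \<and> (\<forall>a\<in>?C. \<forall>b\<in>?C. a \<noteq> b \<longrightarrow> E a b)"
      using C(2) uv below cl by simp
    hence "card ?C \<in> D v" unfolding D_def by (rule cardI[where P="\<lambda>C. C \<subseteq> V \<and> v \<in> C \<and> (\<forall>u\<in>C. u \<noteq> v \<longrightarrow> R u v) \<and> (\<forall>u\<in>C. \<forall>w\<in>C. u \<noteq> w \<longrightarrow> E u w)"])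
    hence "card ?C \<le> h v" unfolding h_def using Dfin by simp
    moreover have "card ?C = h u + 1" using C(1) vC finC by simp
    ultimately show ?thesis by simp
  qed
  define c where "c = (\<lambda>v. h v - 1)"
  have Pom: "P \<omega>"
    unfolding P_def
  proof (intro exI[of _ c] conjI ballI impI)
    fix v assume "v \<in> V"
    have "1 \<le> h v" "h v \<le> \<omega>" using h1 hom \<open>v \<in> V\<close> by auto
    thus "c v < \<omega>" unfolding c_def by arith
  next
    fix u v assume uv: "u \<in> V" "v \<in> V" "E u v"
    have "u \<noteq> v" using uv Eirr by blast
    hence "R u v \<or> R v u" using Eiff uv by blast
    hence "h u \<noteq> h v"
    proof
      assume "R u v" hence "h u < h v" using hlt uv by blast
      thus ?thesis by simp
    next
      assume "R v u" hence "h v < h u" using hlt uv by blast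
      thus ?thesis by simp
    qed
    moreover have "1 \<le> h u" "1 \<le> h v" using h1 uv by auto
    ultimately show "c u \<noteq> c v" unfolding c_def by arith
  qed
  have "(LEAST n. P n) \<le> \<omega>" using Pom by (rule Least_le)
  moreover have "\<omega> \<le> (LEAST n. P n)" using low LeastI[of P, OF Pom] by blast
  ultimately show ?thesis using chi om by simp
qed



lemma pt_at:
  assumes "nice A" shows "\<exists>a\<in>A. fst a = x"
  using nice_wide[OF assms] unfolding wide_def by blast

lemma rel_disj:
  assumes nA: "nice A" and nB: "nice B" and d: "A \<inter> B = {}"
  shows "B \<subseteq> upside A \<or> A \<subseteq> upside B"
proof -
  obtain MA where MA: "\<forall>p\<in>A. \<forall>q\<in>A. fst p = fst q \<and> MA \<le> fst p \<longrightarrow> p = q"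
    using nice_uniq[OF nA] by blast
  obtain MB where MB: "\<forall>p\<in>B. \<forall>q\<in>B. fst p = fst q \<and> MB \<le> fst p \<longrightarrow> p = q"
    using nice_uniq[OF nB] by blast
  define x where "x = max MA MB"
  obtain a where a: "a \<in> A" "fst a = x" using pt_at[OF nA] by blast
  obtain b where b: "b \<in> B" "fst b = x" using pt_at[OF nB] by blast
  have "a \<noteq> b" using a b d by blast
  hence "snd a \<noteq> snd b" using a b by (metis prod_eq_iff)
  hence "snd a < snd b \<or> snd b < snd a" by linarith
  thus ?thesis
  proof
    assume lt: "snd a < snd b"
    have MAx: "MA \<le> fst a" using a unfolding x_def by simp
    have "b \<in> upside A" using up_above[OF nA MA a(1) MAx] lt a b by simp
    moreover have Uc: "upside A \<in> components (- A)" using upside_prop[OF nA] by blast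
    moreover have "B \<subseteq> - A" using d by blast
    ultimately have "B \<subseteq> upside A" using components_maximal[OF Uc nice_connected[OF nB]] b(1) by blast
    thus ?thesis by blast
  next
    assume lt: "snd b < snd a"
    have MBx: "MB \<le> fst b" using b unfolding x_def by simp
    have "a \<in> upside B" using up_above[OF nB MB b(1) MBx] lt a b by simp
    moreover have Uc: "upside B \<in> components (- B)" using upside_prop[OF nB] by blast
    moreover have "A \<subseteq> - B" using d by blast
    ultimately have "A \<subseteq> upside B" using components_maximal[OF Uc nice_connected[OF nA]] a(1) by blast
    thus ?thesis by blast
  qed
qed

lemma order_up:
  assumes nA: "nice A" and sub: "B \<subseteq> upside A"
  shows "\<exists>M. \<forall>a\<in>A. \<forall>b\<in>B. fst a = fst b \<and> M \<le> fst a \<longrightarrow> snd a < snd b"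
proof -
  obtain MA where MA: "\<forall>p\<in>A. \<forall>q\<in>A. fst p = fst q \<and> MA \<le> fst p \<longrightarrow> p = q"
    using nice_uniq[OF nA] by blast
  have "\<forall>a\<in>A. \<forall>b\<in>B. fst a = fst b \<and> MA \<le> fst a \<longrightarrow> snd a < snd b"
  proof (intro ballI impI)
    fix a b assume a: "a \<in> A" and b: "b \<in> B" and h: "fst a = fst b \<and> MA \<le> fst a"
    have bU: "b \<in> upside A" using sub b by blast
    hence "b \<notin> A" using upside_sub[OF nA] by blast
    hence "b \<noteq> a" using a by blast
    hence "snd a \<noteq> snd b" using h by (metis prod_eq_iff)
    moreover have "\<not> snd b < snd a"
    proof
      assume "snd b < snd a"
      hence "b \<notin> upside A" using up_below[OF nA MA a] h by simp
      thus False using bU by blast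
    qed
    ultimately show "snd a < snd b" by linarith
  qed
  thus ?thesis by blast
qed

lemma no_cycle2:
  assumes nA: "nice A" and nB: "nice B" and "B \<subseteq> upside A" and "A \<subseteq> upside B"
  shows False
proof -
  obtain M1 where M1: "\<forall>a\<in>A. \<forall>b\<in>B. fst a = fst b \<and> M1 \<le> fst a \<longrightarrow> snd a < snd b"
    using order_up[OF nA assms(3)] by blast
  obtain M2 where M2: "\<forall>b\<in>B. \<forall>a\<in>A. fst b = fst a \<and> M2 \<le> fst b \<longrightarrow> snd b < snd a"
    using order_up[OF nB assms(4)] by blast
  define x where "x = max M1 M2"
  obtain a where a: "a \<in> A" "fst a = x" using pt_at[OF nA] by blast
  obtain b where b: "b \<in> B" "fst b = x" using pt_at[OF nB] by blast
  have "snd a < snd b" using M1 a b unfolding x_def by simp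
  moreover have "snd b < snd a" using M2 a b unfolding x_def by simp
  ultimately show False by linarith
qed

lemma no_cycle3:
  assumes nA: "nice A" and nB: "nice B" and nC: "nice C"
    and "B \<subseteq> upside A" and "C \<subseteq> upside B" and "A \<subseteq> upside C"
  shows False
proof -
  obtain M1 where M1: "\<forall>a\<in>A. \<forall>b\<in>B. fst a = fst b \<and> M1 \<le> fst a \<longrightarrow> snd a < snd b"
    using order_up[OF nA assms(4)] by blast
  obtain M2 where M2: "\<forall>b\<in>B. \<forall>c\<in>C. fst b = fst c \<and> M2 \<le> fst b \<longrightarrow> snd b < snd c"
    using order_up[OF nB assms(5)] by blast
  obtain M3 where M3: "\<forall>c\<in>C. \<forall>a\<in>A. fst c = fst a \<and> M3 \<le> fst c \<longrightarrow> snd c < snd a"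
    using order_up[OF nC assms(6)] by blast
  define x where "x = max M1 (max M2 M3)"
  obtain a where a: "a \<in> A" "fst a = x" using pt_at[OF nA] by blast
  obtain b where b: "b \<in> B" "fst b = x" using pt_at[OF nB] by blast
  obtain c where c: "c \<in> C" "fst c = x" using pt_at[OF nC] by blast
  have "snd a < snd b" using M1 a b unfolding x_def by simp
  moreover have "snd b < snd c" using M2 b c unfolding x_def by simp
  moreover have "snd c < snd a" using M3 a c unfolding x_def by simp
  ultimately show False by linarith
qed

lemma higher_trans:
  assumes nA: "nice A" and nB: "nice B" and nC: "nice C"
    and AB: "higher A B" and BC: "higher B C"
  shows "higher A C"
proof -
  have sAB: "B \<subseteq> upside A" and sBC: "C \<subseteq> upside B" using AB BC unfolding higher_def by auto
  have dAB: "A \<inter> B = {}" using sAB upside_sub[OF nA] by blast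
  have dAC: "A \<inter> C = {}"
  proof (rule ccontr)
    assume "A \<inter> C \<noteq> {}"
    then obtain p where p: "p \<in> A" "p \<in> C" by blast
    have pU: "p \<in> upside B" using sBC p by blast
    have Uc: "upside B \<in> components (- B)" using upside_prop[OF nB] by blast
    have "A \<subseteq> - B" using dAB by blast
    hence "A \<subseteq> upside B" using components_maximal[OF Uc nice_connected[OF nA]] p(1) pU by blast
    thus False using no_cycle2[OF nA nB sAB] by blast
  qed
  from rel_disj[OF nA nC dAC] show ?thesis
  proof
    assume "C \<subseteq> upside A" thus ?thesis unfolding higher_def .
  next
    assume "A \<subseteq> upside C"
    hence False using no_cycle3[OF nA nB nC sAB sBC] by blast
    thus ?thesis ..
  qed
qed



theorem mainTheorem9:
  fixes k :: nat and F :: "point set set"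
  assumes "k \<ge> 1" and "finite F"
    and "\<forall>A\<in>F. k_monotone_chain k A \<and> wide A"
  shows "(\<forall>A\<in>F. \<not> higher A A)
       \<and> (\<forall>A\<in>F. \<forall>B\<in>F. \<forall>C\<in>F. higher A B \<and> higher B C \<longrightarrow> higher A C)
       \<and> (\<forall>A\<in>F. \<forall>B\<in>F. A \<noteq> B \<longrightarrow> ((higher A B \<or> higher B A) \<longleftrightarrow> A \<inter> B = {}))
       \<and> comparability_graph F (disj_edge F)
       \<and> chromatic_number F (disj_edge F) = clique_number F (disj_edge F)"
proof -
  have N: "nice A" if "A \<in> F" for A
    using chain_nice[OF assms(1)] assms(3) that by blast
  have irr: "\<forall>A\<in>F. \<not> higher A A"
  proof
    fix A assume A: "A \<in> F"
    show "\<not> higher A A"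
    proof
      assume "higher A A"
      hence "A \<subseteq> - A" using upside_sub[OF N[OF A]] unfolding higher_def by blast
      thus False using nice_ne[OF N[OF A]] by blast
    qed
  qed
  have tr: "\<forall>A\<in>F. \<forall>B\<in>F. \<forall>C\<in>F. higher A B \<and> higher B C \<longrightarrow> higher A C"
    using higher_trans N by blast
  have cmp: "\<forall>A\<in>F. \<forall>B\<in>F. A \<noteq> B \<longrightarrow> ((higher A B \<or> higher B A) \<longleftrightarrow> A \<inter> B = {})"
  proof (intro ballI impI)
    fix A B assume A: "A \<in> F" and B: "B \<in> F" and "A \<noteq> B"
    show "(higher A B \<or> higher B A) \<longleftrightarrow> A \<inter> B = {}"
    proof
      assume "higher A B \<or> higher B A"
      thus "A \<inter> B = {}" using upside_sub[OF N[OF A]] upside_sub[OF N[OF B]]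
        unfolding higher_def by blast
    next
      assume "A \<inter> B = {}"
      thus "higher A B \<or> higher B A" using rel_disj[OF N[OF A] N[OF B]] unfolding higher_def by blast
    qed
  qed
  have Eiff: "\<forall>a\<in>F. \<forall>b\<in>F. a \<noteq> b \<longrightarrow> (disj_edge F a b \<longleftrightarrow> higher a b \<or> higher b a)"
    using cmp unfolding disj_edge_def by blast
  have cg: "comparability_graph F (disj_edge F)"
    unfolding comparability_graph_def using irr tr Eiff by blast
  have Eirr: "\<forall>a\<in>F. \<not> disj_edge F a a" unfolding disj_edge_def by blast
  have "chromatic_number F (disj_edge F) = clique_number F (disj_edge F)"
    by (rule perfect_comp[OF assms(2) irr tr Eiff Eirr])
  thus ?thesis using irr tr cmp cg by blast
qed


end
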